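(* Let $n\ge1$ and $P=[2]\times[n]$. The statistic $I\mapsto|\mathrm{Max}(I)|-|\mathrm{Min}(I)|$ (number of maximal elements of $I$ minus number of minimal elements of $I$) is $0$-mesic under rowmotion on $\mathcal{IC}(P)$.
   Context: $[n]$ is the chain $1<\cdots<n$; $[2]\times[n]$ has the componentwise order. All posets are finite. A subset $I\subseteq P$ is interval-closed if for all $x,y\in I$ and $z\in P$ with $x\le z\le y$ we have $z\in I$; $\mathcal{IC}(P)$ is the set of interval-closed subsets of $P$. For $x\in P$ the toggle $t_x:\mathcal{IC}(P)\to\mathcal{IC}(P)$ is defined by $t_x(I)=I\triangle\{x\}$ if $I\triangle\{x\}\in\mathcal{IC}(P)$ and $t_x(I)=I$ otherwise. Rowmotion is $\mathrm{Row}=t_{x_1}\circ t_{x_2}\circ\cdots\circ t_{x_N}$, where $(x_1,\dots,x_N)$ is a linear extension of $P$ (toggling from the top down). $\mathrm{Max}(I)$ and $\mathrm{Min}(I)$ are the sets of maximal and minimal elements of $I$ (empty if $I=\emptyset$). A statistic is $c$-mesic if its average over every rowmotion orbit equals $c$. *)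

theory Defs
  imports Complex_Main
begin

definition twoByN :: "nat \<Rightarrow> (nat \<times> nat) set" where
  "twoByN n = {1..2} \<times> {1..n}"

definition cle :: "nat \<times> nat \<Rightarrow> nat \<times> nat \<Rightarrow> bool" where
  "cle x y \<longleftrightarrow> fst x \<le> fst y \<and> snd x \<le> snd y"

definition interval_closed :: "'a set \<Rightarrow> ('a \<Rightarrow> 'a \<Rightarrow> bool) \<Rightarrow> 'a set \<Rightarrow> bool" where
  "interval_closed P le I \<longleftrightarrow> I \<subseteq> P \<and>
     (\<forall>x\<in>I. \<forall>y\<in>I. \<forall>z\<in>P. le x z \<and> le z y \<longrightarrow> z \<in> I)"

definition IC :: "'a set \<Rightarrow> ('a \<Rightarrow> 'a \<Rightarrow> bool) \<Rightarrow> 'a set set" where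
  "IC P le = {I. interval_closed P le I}"

definition toggle :: "'a set \<Rightarrow> ('a \<Rightarrow> 'a \<Rightarrow> bool) \<Rightarrow> 'a \<Rightarrow> 'a set \<Rightarrow> 'a set" where
  "toggle P le x I = (if interval_closed P le ((I - {x}) \<union> ({x} - I)) then (I - {x}) \<union> ({x} - I) else I)"

definition linear_extension :: "'a set \<Rightarrow> ('a \<Rightarrow> 'a \<Rightarrow> bool) \<Rightarrow> 'a list \<Rightarrow> bool" where
  "linear_extension P le xs \<longleftrightarrow> distinct xs \<and> set xs = P \<and>
     (\<forall>i<length xs. \<forall>j<length xs. le (xs ! i) (xs ! j) \<longrightarrow> i \<le> j)"

(* Row = t_{x_1} o t_{x_2} o ... o t_{x_N}: x_N (top) is toggled first. *)
definition rowmotion :: "'a set \<Rightarrow> ('a \<Rightarrow> 'a \<Rightarrow> bool) \<Rightarrow> 'a list \<Rightarrow> 'a set \<Rightarrow> 'a set" where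
  "rowmotion P le xs I = foldr (toggle P le) xs I"

definition maxel :: "('a \<Rightarrow> 'a \<Rightarrow> bool) \<Rightarrow> 'a set \<Rightarrow> 'a set" where
  "maxel le I = {x \<in> I. \<forall>y\<in>I. le x y \<longrightarrow> y = x}"

definition minel :: "('a \<Rightarrow> 'a \<Rightarrow> bool) \<Rightarrow> 'a set \<Rightarrow> 'a set" where
  "minel le I = {x \<in> I. \<forall>y\<in>I. le y x \<longrightarrow> y = x}"

definition orbit :: "('b \<Rightarrow> 'b) \<Rightarrow> 'b \<Rightarrow> 'b set" where
  "orbit f x = {(f ^^ k) x | k. True}"

definition mesic :: "'b set \<Rightarrow> ('b \<Rightarrow> 'b) \<Rightarrow> ('b \<Rightarrow> real) \<Rightarrow> real \<Rightarrow> bool" where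
  "mesic S f st c \<longleftrightarrow>
     (\<forall>x\<in>S. (\<Sum>y\<in>orbit f x. st y) / real (card (orbit f x)) = c)"

end

theory Submission
  imports Defs
begin



definition Lo :: "(nat\<times>nat) set \<Rightarrow> nat\<times>nat \<Rightarrow> bool" where
  "Lo I x = (\<exists>a\<in>I. cle a x \<and> a \<noteq> x)"
definition Up :: "(nat\<times>nat) set \<Rightarrow> nat\<times>nat \<Rightarrow> bool" where
  "Up R x = (\<exists>b\<in>R. cle x b \<and> b \<noteq> x)"
definition gLo :: "(nat\<times>nat) set \<Rightarrow> (nat\<times>nat) set \<Rightarrow> nat\<times>nat \<Rightarrow> bool" where
  "gLo P I x = (\<exists>a\<in>I. \<exists>z\<in>P. cle a z \<and> cle z x \<and> z \<notin> I \<and> z \<noteq> x)"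
definition gUp :: "(nat\<times>nat) set \<Rightarrow> (nat\<times>nat) set \<Rightarrow> nat\<times>nat \<Rightarrow> bool" where
  "gUp P R x = (\<exists>b\<in>R. \<exists>z\<in>P. cle x z \<and> cle z b \<and> z \<notin> R \<and> z \<noteq> x)"
definition phi :: "(nat\<times>nat) set \<Rightarrow> (nat\<times>nat) set \<Rightarrow> (nat\<times>nat) set \<Rightarrow> nat\<times>nat \<Rightarrow> bool" where
  "phi P I R x = (
     (x\<in>I \<and> x\<in>R \<longrightarrow> Lo I x \<and> Up R x) \<and>
     ((x\<in>I) \<noteq> (x\<in>R) \<longrightarrow> \<not>(Lo I x \<and> Up R x) \<and> \<not> gLo P I x \<and> \<not> gUp P R x) \<and>
     (x\<notin>I \<and> x\<notin>R \<longrightarrow> gLo P I x \<or> gUp P R x))"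

lemma cle_refl: "cle x x" by (simp add: cle_def)
lemma cle_trans: "cle x y \<Longrightarrow> cle y z \<Longrightarrow> cle x z" by (auto simp: cle_def)
lemma cle_antisym: "cle x y \<Longrightarrow> cle y x \<Longrightarrow> x = y" by (auto simp: cle_def prod_eq_iff)

lemma toggle_IC: "interval_closed P le J \<Longrightarrow> interval_closed P le (toggle P le x J)"
  by (simp add: toggle_def)

lemma toggle_other: "y \<noteq> x \<Longrightarrow> (y \<in> toggle P le x J) = (y \<in> J)"
  by (auto simp: toggle_def)

lemma toggle_invol:
  assumes J: "interval_closed P le J" shows "toggle P le x (toggle P le x J) = J"
proof (cases "interval_closed P le ((J - {x}) \<union> ({x} - J))")
  case True
  have e: "(((J - {x}) \<union> ({x} - J)) - {x}) \<union> ({x} - ((J - {x}) \<union> ({x} - J))) = J" by auto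
  have t: "toggle P le x J = (J - {x}) \<union> ({x} - J)" using True unfolding toggle_def by simp
  show ?thesis unfolding t unfolding toggle_def e using J by simp
next
  case False
  then show ?thesis unfolding toggle_def by simp
qed

lemma G1:
  assumes K: "interval_closed P cle K" and x: "x \<in> P" and nx: "x \<notin> K"
    and below: "\<And>a. a\<in>P \<Longrightarrow> cle a x \<Longrightarrow> a\<noteq>x \<Longrightarrow> (a\<in>K \<longleftrightarrow> a\<in>I)"
    and above: "\<And>b. b\<in>P \<Longrightarrow> cle x b \<Longrightarrow> b\<noteq>x \<Longrightarrow> (b\<in>K \<longleftrightarrow> b\<in>R)"
    and IP: "I \<subseteq> P" and RP: "R \<subseteq> P"
  shows "\<not>(Lo I x \<and> Up R x)"
proof
  assume "Lo I x \<and> Up R x"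
  then obtain a b where a: "a\<in>I" "cle a x" "a\<noteq>x" and b: "b\<in>R" "cle x b" "b\<noteq>x"
    unfolding Lo_def Up_def by blast
  have "a \<in> K" using below[of a] a IP by auto
  moreover have "b \<in> K" using above[of b] b RP by auto
  ultimately have "x \<in> K" using K x a b unfolding interval_closed_def by blast
  with nx show False by simp
qed

lemma G2:
  assumes K: "interval_closed P cle K" and x: "x \<in> P" and xK: "x \<in> K"
    and below: "\<And>a. a\<in>P \<Longrightarrow> cle a x \<Longrightarrow> a\<noteq>x \<Longrightarrow> (a\<in>K \<longleftrightarrow> a\<in>I)"
    and above: "\<And>b. b\<in>P \<Longrightarrow> cle x b \<Longrightarrow> b\<noteq>x \<Longrightarrow> (b\<in>K \<longleftrightarrow> b\<in>R)"
    and IP: "I \<subseteq> P" and RP: "R \<subseteq> P"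
  shows "\<not> gLo P I x \<and> \<not> gUp P R x"
proof
  show "\<not> gLo P I x"
  proof
    assume "gLo P I x"
    then obtain a z where a: "a\<in>I" and z: "z\<in>P" "cle a z" "cle z x" "z\<notin>I" "z\<noteq>x"
      unfolding gLo_def by blast
    have ax: "a \<noteq> x" using z cle_antisym by blast
    have "a \<in> K" using below[of a] a IP ax cle_trans[OF z(2) z(3)] by auto
    hence "z \<in> K" using K xK z unfolding interval_closed_def by blast
    hence "z \<in> I" using below[of z] z by auto
    with z show False by simp
  qed
  show "\<not> gUp P R x"
  proof
    assume "gUp P R x"
    then obtain b z where b: "b\<in>R" and z: "z\<in>P" "cle x z" "cle z b" "z\<notin>R" "z\<noteq>x"
      unfolding gUp_def by blast
    have bx: "b \<noteq> x" using z cle_antisym by blast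
    have "b \<in> K" using above[of b] b RP bx cle_trans[OF z(2) z(3)] by auto
    hence "z \<in> K" using K xK z unfolding interval_closed_def by blast
    hence "z \<in> R" using above[of z] z by auto
    with z show False by simp
  qed
qed

lemma toggle_phi:
  assumes J: "interval_closed P cle J" and x: "x\<in>P"
    and J': "J' = toggle P cle x J"
    and below: "\<And>a. a\<in>P \<Longrightarrow> cle a x \<Longrightarrow> a\<noteq>x \<Longrightarrow> (a\<in>J \<longleftrightarrow> a\<in>I) \<and> (a\<in>J' \<longleftrightarrow> a\<in>I)"
    and above: "\<And>b. b\<in>P \<Longrightarrow> cle x b \<Longrightarrow> b\<noteq>x \<Longrightarrow> (b\<in>J \<longleftrightarrow> b\<in>R) \<and> (b\<in>J' \<longleftrightarrow> b\<in>R)"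
    and xI: "x\<in>J \<longleftrightarrow> x\<in>I" and xR: "x\<in>J' \<longleftrightarrow> x\<in>R"
    and IP: "I \<subseteq> P" and RP: "R \<subseteq> P"
  shows "phi P I R x"
proof -
  have J'IC: "interval_closed P cle J'" unfolding J' by (rule toggle_IC[OF J])
  have JP: "J \<subseteq> P" using J by (simp add: interval_closed_def)
  note G1J = G1[OF J x _ _ _ IP RP] 
  note G1J' = G1[OF J'IC x _ _ _ IP RP]
  note G2J = G2[OF J x _ _ _ IP RP]
  note G2J' = G2[OF J'IC x _ _ _ IP RP]
  have p1: "x\<in>I \<and> x\<in>R \<longrightarrow> Lo I x \<and> Up R x"
  proof
    assume h: "x\<in>I \<and> x\<in>R"
    hence xJ: "x \<in> J" "x \<in> J'" using xI xR by auto
    have nIC: "\<not> interval_closed P cle ((J - {x}) \<union> ({x} - J))"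
    proof
      assume "interval_closed P cle ((J - {x}) \<union> ({x} - J))"
      hence "J' = (J - {x}) \<union> ({x} - J)" using J' by (simp add: toggle_def)
      with xJ show False by auto
    qed
    have F: "(J - {x}) \<union> ({x} - J) = J - {x}" using xJ by auto
    have "J - {x} \<subseteq> P" using JP by auto
    then obtain u v z where uv: "u \<in> J - {x}" "v \<in> J - {x}" "z\<in>P" "cle u z" "cle z v" "z \<notin> J - {x}"
      using nIC unfolding F interval_closed_def by blast
    have "z \<in> J" using J uv unfolding interval_closed_def by blast
    hence zx: "z = x" using uv by auto
    have "u \<in> I" using below[of u] uv zx JP by auto
    moreover have "v \<in> R" using above[of v] uv zx JP by auto
    ultimately show "Lo I x \<and> Up R x" unfolding Lo_def Up_def using uv zx by auto
  qed
  have p2: "(x\<in>I) \<noteq> (x\<in>R) \<longrightarrow> \<not>(Lo I x \<and> Up R x) \<and> \<not> gLo P I x \<and> \<not> gUp P R x"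
  proof
    assume h: "(x\<in>I) \<noteq> (x\<in>R)"
    show "\<not>(Lo I x \<and> Up R x) \<and> \<not> gLo P I x \<and> \<not> gUp P R x"
    proof (cases "x \<in> I")
      case True
      hence "x \<in> J" "x \<notin> J'" using h xI xR by auto
      thus ?thesis using G1J' G2J below above by blast
    next
      case False
      hence "x \<notin> J" "x \<in> J'" using h xI xR by auto
      thus ?thesis using G1J G2J' below above by blast
    qed
  qed
  have p3: "x\<notin>I \<and> x\<notin>R \<longrightarrow> gLo P I x \<or> gUp P R x"
  proof
    assume h: "x\<notin>I \<and> x\<notin>R"
    hence xJ: "x \<notin> J" "x \<notin> J'" using xI xR by auto
    have nIC: "\<not> interval_closed P cle ((J - {x}) \<union> ({x} - J))"
    proof
      assume "interval_closed P cle ((J - {x}) \<union> ({x} - J))"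
      hence "J' = (J - {x}) \<union> ({x} - J)" using J' by (simp add: toggle_def)
      with xJ show False by auto
    qed
    have F: "(J - {x}) \<union> ({x} - J) = insert x J" using xJ by auto
    have "insert x J \<subseteq> P" using JP x by auto
    then obtain u v z where uv: "u \<in> insert x J" "v \<in> insert x J" "z\<in>P" "cle u z" "cle z v" "z \<notin> insert x J"
      using nIC unfolding F interval_closed_def by blast
    show "gLo P I x \<or> gUp P R x"
    proof (cases "u = x")
      case True
      have vx: "v \<noteq> x" using True uv cle_antisym by blast
      hence vJ: "v \<in> J" using uv by auto
      have vR: "v \<in> R" using above[of v] vJ JP uv True cle_trans vx by blast
      have "z \<notin> R" using above[of z] uv True by auto
      hence "gUp P R x" unfolding gUp_def using vR uv True by auto
      thus ?thesis by simp
    next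
      case False
      hence uJ: "u \<in> J" using uv by auto
      show ?thesis
      proof (cases "v = x")
        case True
        have ux: "u \<noteq> x" using False .
        have uI: "u \<in> I" using below[of u] uJ JP uv True cle_trans ux by blast
        have "z \<notin> I" using below[of z] uv True by auto
        hence "gLo P I x" unfolding gLo_def using uI uv True by auto
        thus ?thesis by simp
      next
        case False
        hence "v \<in> J" using uv by auto
        hence "z \<in> J" using J uJ uv unfolding interval_closed_def by blast
        with uv show ?thesis by auto
      qed
    qed
  qed
  show ?thesis unfolding phi_def using p1 p2 p3 by blast
qed




lemma foldr_toggle_notin: "y \<notin> set ys \<Longrightarrow> (y \<in> foldr (toggle P le) ys J) = (y \<in> J)"
  by (induction ys) (auto simp: toggle_other)

lemma foldr_toggle_IC: "interval_closed P le J \<Longrightarrow> interval_closed P le (foldr (toggle P le) ys J)"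
  by (induction ys) (auto simp: toggle_IC)

lemma foldr_toggle_inj:
  "interval_closed P le J \<Longrightarrow> interval_closed P le K \<Longrightarrow>
   foldr (toggle P le) ys J = foldr (toggle P le) ys K \<Longrightarrow> J = K"
proof (induction ys)
  case Nil then show ?case by simp
next
  case (Cons y ys)
  have "toggle P le y (toggle P le y (foldr (toggle P le) ys J)) = toggle P le y (toggle P le y (foldr (toggle P le) ys K))"
    using Cons.prems(3) by simp
  hence "foldr (toggle P le) ys J = foldr (toggle P le) ys K"
    using toggle_invol foldr_toggle_IC Cons.prems by metis
  thus ?case using Cons by blast
qed

lemma in_set_drop_idx:
  assumes "distinct xs" "i < length xs" "xs ! i \<in> set (drop k xs)" shows "k \<le> i"
proof -
  obtain j where j: "j < length (drop k xs)" "drop k xs ! j = xs ! i"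
    using assms(3) by (auto simp: in_set_conv_nth)
  hence "xs ! (k + j) = xs ! i" "k + j < length xs" by auto
  hence "k + j = i" using assms nth_eq_iff_index_eq by blast
  thus ?thesis by simp
qed

lemma in_set_take_idx:
  assumes "distinct xs" "i < length xs" "xs ! i \<in> set (take k xs)" shows "i < k"
proof -
  obtain j where j: "j < length (take k xs)" "take k xs ! j = xs ! i"
    using assms(3) by (auto simp: in_set_conv_nth)
  hence "xs ! j = xs ! i" "j < length xs" "j < k" by auto
  hence "j = i" using assms nth_eq_iff_index_eq by blast
  thus ?thesis using \<open>j < k\<close> by simp
qed

lemma row_phi:
  assumes le: "linear_extension P cle xs" and IIC: "interval_closed P cle I" and x: "x \<in> P"
  shows "phi P I (rowmotion P cle xs I) x"
proof -
  let ?R = "rowmotion P cle xs I"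
  define S where "S k = foldr (toggle P cle) (drop k xs) I" for k
  have dist: "distinct xs" and setxs: "set xs = P"
    and ord: "\<And>i j. i < length xs \<Longrightarrow> j < length xs \<Longrightarrow> cle (xs!i) (xs!j) \<Longrightarrow> i \<le> j"
    using le unfolding linear_extension_def by auto
  obtain k where k: "k < length xs" "xs ! k = x" using x setxs by (auto simp: in_set_conv_nth)
  have S0: "S 0 = ?R" unfolding S_def rowmotion_def by simp
  have SI: "\<And>m. interval_closed P cle (S m)" unfolding S_def using foldr_toggle_IC IIC by blast
  have Sk: "S k = toggle P cle x (S (Suc k))" unfolding S_def using k
    by (simp add: Cons_nth_drop_Suc[symmetric])
  have toI: "\<And>y m. y \<notin> set (drop m xs) \<Longrightarrow> (y \<in> S m) = (y \<in> I)"
    unfolding S_def by (rule foldr_toggle_notin)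
  have toR: "\<And>y m. y \<notin> set (take m xs) \<Longrightarrow> (y \<in> S m) = (y \<in> ?R)"
  proof -
    fix y m assume "y \<notin> set (take m xs)"
    hence "(y \<in> foldr (toggle P cle) (take m xs) (S m)) = (y \<in> S m)" by (rule foldr_toggle_notin)
    moreover have "foldr (toggle P cle) (take m xs) (S m) = ?R"
      unfolding S_def rowmotion_def by (metis foldr_append append_take_drop_id comp_apply)
    ultimately show "(y \<in> S m) = (y \<in> ?R)" by simp
  qed
  have IP: "I \<subseteq> P" using IIC by (simp add: interval_closed_def)
  have RP: "?R \<subseteq> P" using SI[of 0] S0 by (simp add: interval_closed_def)
  show ?thesis
  proof (rule toggle_phi[OF SI x Sk _ _ _ _ IP RP])
    fix a assume a: "a \<in> P" "cle a x" "a \<noteq> x"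
    obtain i where i: "i < length xs" "xs ! i = a" using a setxs by (auto simp: in_set_conv_nth)
    have "i \<le> k" using ord i k a by blast
    hence ik: "i < k" using i k a by (cases "i = k") auto
    have "a \<notin> set (drop (Suc k) xs)" "a \<notin> set (drop k xs)"
      using in_set_drop_idx[OF dist i(1)] ik i by fastforce+
    thus "(a \<in> S (Suc k)) = (a \<in> I) \<and> (a \<in> S k) = (a \<in> I)" using toI by blast
  next
    fix b assume b: "b \<in> P" "cle x b" "b \<noteq> x"
    obtain i where i: "i < length xs" "xs ! i = b" using b setxs by (auto simp: in_set_conv_nth)
    have "k \<le> i" using ord i k b by blast
    hence ik: "k < i" using i k b by (cases "i = k") auto
    have "b \<notin> set (take (Suc k) xs)" "b \<notin> set (take k xs)"
      using in_set_take_idx[OF dist i(1)] ik i by fastforce+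
    thus "(b \<in> S (Suc k)) = (b \<in> ?R) \<and> (b \<in> S k) = (b \<in> ?R)" using toR by blast
  next
    have "x \<notin> set (drop (Suc k) xs)" using in_set_drop_idx[OF dist k(1)] k by fastforce
    thus "(x \<in> S (Suc k)) = (x \<in> I)" using toI by blast
  next
    have "x \<notin> set (take k xs)" using in_set_take_idx[OF dist k(1)] k by fastforce
    thus "(x \<in> S k) = (x \<in> ?R)" using toR by blast
  qed
qed

lemma row_IC: "interval_closed P cle I \<Longrightarrow> interval_closed P cle (rowmotion P cle xs I)"
  unfolding rowmotion_def by (rule foldr_toggle_IC)

lemma row_inj: "interval_closed P cle I \<Longrightarrow> interval_closed P cle K \<Longrightarrow>
   rowmotion P cle xs I = rowmotion P cle xs K \<Longrightarrow> I = K"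
  unfolding rowmotion_def by (rule foldr_toggle_inj)




definition Sh :: "nat \<Rightarrow> nat \<Rightarrow> nat \<Rightarrow> nat \<Rightarrow> (nat\<times>nat) set" where
  "Sh p1 q1 p2 q2 = {(i,j). (i=1 \<and> p1\<le>j \<and> j\<le>q1) \<or> (i=2 \<and> p2\<le>j \<and> j\<le>q2)}"

definition A :: "(nat\<times>nat) set \<Rightarrow> bool" where
  "A I = (\<exists>b c d. (1,b)\<in>I \<and> (2,c)\<in>I \<and> b\<le>c \<and> (1,d)\<in>I \<and> (\<forall>e. (2,e)\<in>I \<longrightarrow> e<d))"
definition B :: "(nat\<times>nat) set \<Rightarrow> bool" where
  "B I = (\<exists>b c d. (1,b)\<in>I \<and> (2,c)\<in>I \<and> b\<le>c \<and> (2,d)\<in>I \<and> (\<forall>e. (1,e)\<in>I \<longrightarrow> d<e))"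

lemma memP: "((i,j) \<in> twoByN n) = (1\<le>i \<and> i\<le>2 \<and> 1\<le>j \<and> j\<le>n)"
  by (auto simp: twoByN_def)

lemma memSh: "((i,j) \<in> Sh p1 q1 p2 q2) = ((i=1 \<and> p1\<le>j \<and> j\<le>q1) \<or> (i=2 \<and> p2\<le>j \<and> j\<le>q2))"
  by (simp add: Sh_def)

lemma row_shape:
  assumes IC: "interval_closed (twoByN n) cle I"
  shows "\<exists>p q. 1\<le>p \<and> q\<le>n \<and> (\<forall>j. (i,j)\<in>I \<longleftrightarrow> p\<le>j \<and> j\<le>q)"
proof (cases "{j. (i,j)\<in>I} = {}")
  case True
  show ?thesis by (rule exI[of _ 1], rule exI[of _ 0]) (use True in auto)
next
  case False
  let ?r = "{j. (i,j)\<in>I}"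
  have IP: "I \<subseteq> twoByN n" using IC by (simp add: interval_closed_def)
  have sub: "?r \<subseteq> {1..n}" using IP by (auto simp: memP)
  hence fin: "finite ?r" using finite_subset by blast
  have pin: "(i, Min ?r) \<in> I" using Min_in[OF fin False] by simp
  have qin: "(i, Max ?r) \<in> I" using Max_in[OF fin False] by simp
  have p1: "1 \<le> Min ?r" using sub Min_in[OF fin False] by auto
  have qn: "Max ?r \<le> n" using sub Max_in[OF fin False] by auto
  have "\<forall>j. (i,j)\<in>I \<longleftrightarrow> Min ?r\<le>j \<and> j\<le>Max ?r"
  proof (intro allI iffI)
    fix j assume "(i,j)\<in>I" thus "Min ?r\<le>j \<and> j\<le>Max ?r" using fin by auto
  next
    fix j assume j: "Min ?r\<le>j \<and> j\<le>Max ?r"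
    have "(i,j) \<in> twoByN n" using j p1 qn IP pin by (auto simp: memP)
    moreover have "cle (i, Min ?r) (i,j)" "cle (i,j) (i, Max ?r)" using j by (auto simp: cle_def)
    ultimately show "(i,j)\<in>I" using IC pin qin unfolding interval_closed_def by blast
  qed
  thus ?thesis using p1 qn by blast
qed

lemma shape:
  assumes IC: "interval_closed (twoByN n) cle I"
  shows "\<exists>p1 q1 p2 q2. I = Sh p1 q1 p2 q2 \<and> 1\<le>p1 \<and> q1\<le>n \<and> 1\<le>p2 \<and> q2\<le>n \<and>
           (p1\<le>q1 \<and> p2\<le>q2 \<longrightarrow> q2<p1 \<or> (p2\<le>p1 \<and> p1\<le>q2 \<and> q2\<le>q1))"
proof -
  obtain p1 q1 where r1: "1\<le>p1" "q1\<le>n" "\<forall>j. (1,j)\<in>I \<longleftrightarrow> p1\<le>j \<and> j\<le>q1"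
    using row_shape[OF IC, of 1] by blast
  obtain p2 q2 where r2: "1\<le>p2" "q2\<le>n" "\<forall>j. (2,j)\<in>I \<longleftrightarrow> p2\<le>j \<and> j\<le>q2"
    using row_shape[OF IC, of 2] by blast
  have IP: "I \<subseteq> twoByN n" using IC by (simp add: interval_closed_def)
  have eq: "I = Sh p1 q1 p2 q2"
  proof (rule set_eqI)
    fix x :: "nat \<times> nat"
    obtain i j where x: "x = (i,j)" by fastforce
    show "x \<in> I \<longleftrightarrow> x \<in> Sh p1 q1 p2 q2"
    proof
      assume "x \<in> I"
      hence "i = 1 \<or> i = 2" using IP x by (auto simp: memP)
      thus "x \<in> Sh p1 q1 p2 q2" using r1 r2 \<open>x \<in> I\<close> x by (auto simp: memSh)
    next
      assume "x \<in> Sh p1 q1 p2 q2" thus "x \<in> I" using r1 r2 x by (auto simp: memSh)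
    qed
  qed
  have con: "p1\<le>q1 \<and> p2\<le>q2 \<longrightarrow> q2<p1 \<or> (p2\<le>p1 \<and> p1\<le>q2 \<and> q2\<le>q1)"
  proof (intro impI)
    assume ne: "p1\<le>q1 \<and> p2\<le>q2"
    show "q2<p1 \<or> (p2\<le>p1 \<and> p1\<le>q2 \<and> q2\<le>q1)"
    proof (cases "q2 < p1")
      case False
      have a: "(1,p1)\<in>I" "(2,q2)\<in>I" using ne r1 r2 by auto
      have "(1,q2) \<in> twoByN n" "cle (1,p1) (1,q2)" "cle (1,q2) (2,q2)"
        using False r1 r2 by (auto simp: memP cle_def)
      hence "(1,q2)\<in>I" using IC a unfolding interval_closed_def by blast
      hence "q2 \<le> q1" using r1 by auto
      moreover have "(2,p1) \<in> twoByN n" "cle (1,p1) (2,p1)" "cle (2,p1) (2,q2)"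
        using False r1 r2 ne by (auto simp: memP cle_def)
      hence "(2,p1)\<in>I" using IC a unfolding interval_closed_def by blast
      hence "p2 \<le> p1" using r2 by auto
      ultimately show ?thesis using False by auto
    qed simp
  qed
  show ?thesis using eq con r1 r2 by blast
qed

lemma A_Sh: "A (Sh p1 q1 p2 q2) = (p1\<le>q1 \<and> p2\<le>q2 \<and> p1\<le>q2 \<and> q2<q1)"
proof
  assume "A (Sh p1 q1 p2 q2)"
  then obtain b c d where "(1,b)\<in>Sh p1 q1 p2 q2" "(2,c)\<in>Sh p1 q1 p2 q2" "b\<le>c"
    "(1,d)\<in>Sh p1 q1 p2 q2" and e: "\<forall>e. (2,e)\<in>Sh p1 q1 p2 q2 \<longrightarrow> e<d" unfolding A_def by blast
  moreover have "(2,q2) \<in> Sh p1 q1 p2 q2" using calculation by (auto simp: memSh)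
  moreover have "q2 < d" using calculation by blast
  ultimately show "p1\<le>q1 \<and> p2\<le>q2 \<and> p1\<le>q2 \<and> q2<q1" by (auto simp: memSh)
next
  assume "p1\<le>q1 \<and> p2\<le>q2 \<and> p1\<le>q2 \<and> q2<q1"
  thus "A (Sh p1 q1 p2 q2)" unfolding A_def
    by (intro exI[of _ p1] exI[of _ q2] exI[of _ q1]) (auto simp: memSh)
qed

lemma B_Sh: "B (Sh p1 q1 p2 q2) = (p1\<le>q1 \<and> p2\<le>q2 \<and> p1\<le>q2 \<and> p2<p1)"
proof
  assume "B (Sh p1 q1 p2 q2)"
  then obtain b c d where "(1,b)\<in>Sh p1 q1 p2 q2" "(2,c)\<in>Sh p1 q1 p2 q2" "b\<le>c"
    "(2,d)\<in>Sh p1 q1 p2 q2" and e: "\<forall>e. (1,e)\<in>Sh p1 q1 p2 q2 \<longrightarrow> d<e" unfolding B_def by blast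
  moreover have "(1,p1) \<in> Sh p1 q1 p2 q2" using calculation by (auto simp: memSh)
  moreover have "d < p1" using calculation by blast
  ultimately show "p1\<le>q1 \<and> p2\<le>q2 \<and> p1\<le>q2 \<and> p2<p1" by (auto simp: memSh)
next
  assume "p1\<le>q1 \<and> p2\<le>q2 \<and> p1\<le>q2 \<and> p2<p1"
  thus "B (Sh p1 q1 p2 q2)" unfolding B_def
    by (intro exI[of _ p1] exI[of _ q2] exI[of _ p2]) (auto simp: memSh)
qed




lemma core1:
  assumes ph: "\<And>x. x\<in>twoByN n \<Longrightarrow> phi (twoByN n) I R x"
    and RIC: "interval_closed (twoByN n) cle R"
    and I: "I = Sh p1 q1 p2 q2"
    and h: "p1\<le>q1" "p2\<le>q2" "p2\<le>p1" "p1\<le>q2" "q2<q1" "q1\<le>n" "1\<le>p2"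
  shows "B R"
proof -
  let ?P = "twoByN n"
  have memI: "\<And>i j. ((i,j)\<in>I) = ((i=1 \<and> p1\<le>j \<and> j\<le>q1) \<or> (i=2 \<and> p2\<le>j \<and> j\<le>q2))"
    by (simp add: I memSh)
  have RP: "R \<subseteq> ?P" using RIC by (simp add: interval_closed_def)
  have C1': "(2,e)\<notin>R" if e: "q2+1<e" for e
  proof
    assume eR: "(2,e)\<in>R"
    hence xP: "(2,e)\<in>?P" using RP by auto
    have "(2,e)\<notin>I" using memI e by auto
    hence "\<not> gLo ?P I (2,e)" using ph[OF xP] eR unfolding phi_def by auto
    moreover have "gLo ?P I (2,e)" unfolding gLo_def
      by (rule bexI[of _ "(2,q2)"], rule bexI[of _ "(2,q2+1)"])
         (use e xP h in \<open>auto simp: cle_def memI memP\<close>)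
    ultimately show False by simp
  qed
  have xP1: "(2,q2+1) \<in> ?P" using h by (auto simp: memP)
  have C1: "(2,q2+1)\<in>R"
  proof (rule ccontr)
    assume nR: "(2,q2+1)\<notin>R"
    have nI: "(2,q2+1)\<notin>I" using memI by auto
    have "gLo ?P I (2,q2+1) \<or> gUp ?P R (2,q2+1)" using ph[OF xP1] nR nI unfolding phi_def by auto
    moreover have "\<not> gLo ?P I (2,q2+1)"
    proof
      assume "gLo ?P I (2,q2+1)"
      then obtain a1 a2 z1 z2 where "(a1,a2)\<in>I" "(z1,z2)\<in>?P" "cle (a1,a2) (z1,z2)" "cle (z1,z2) (2,q2+1)"
        "(z1,z2)\<notin>I" "(z1,z2)\<noteq>(2,q2+1)" unfolding gLo_def by auto
      thus False using h by (auto simp: memI memP cle_def)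
    qed
    moreover have "\<not> gUp ?P R (2,q2+1)"
    proof
      assume "gUp ?P R (2,q2+1)"
      then obtain b1 b2 z1 z2 where b: "(b1,b2)\<in>R" "(z1,z2)\<in>?P" "cle (2,q2+1) (z1,z2)" "cle (z1,z2) (b1,b2)"
        "(z1,z2)\<notin>R" "(z1,z2)\<noteq>(2,q2+1)" unfolding gUp_def by auto
      have "(b1,b2) \<in> ?P" using b RP by auto
      hence "b1 = 2" "q2+1 < b2 \<or> (b1,b2) = (z1,z2)" using b by (auto simp: memP cle_def)
      thus False using C1'[of b2] b by auto
    qed
    ultimately show False by simp
  qed
  have C2: "(1,p1+1)\<in>R"
  proof (rule ccontr)
    assume nR: "(1,p1+1)\<notin>R"
    have xP: "(1,p1+1)\<in>?P" using h by (auto simp: memP)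
    have xI: "(1,p1+1)\<in>I" using memI h by auto
    have "Lo I (1,p1+1)" unfolding Lo_def by (rule bexI[of _ "(1,p1)"]) (use h in \<open>auto simp: memI cle_def\<close>)
    moreover have "Up R (1,p1+1)" unfolding Up_def by (rule bexI[of _ "(2,q2+1)"]) (use h C1 in \<open>auto simp: cle_def\<close>)
    ultimately show False using ph[OF xP] nR xI unfolding phi_def by auto
  qed
  have C3a: "(1,p1)\<notin>R"
  proof
    assume xR: "(1,p1)\<in>R"
    have xP: "(1,p1)\<in>?P" using xR RP by auto
    have xI: "(1,p1)\<in>I" using memI h by auto
    have "Lo I (1,p1)" using ph[OF xP] xR xI unfolding phi_def by auto
    then obtain a1 a2 where "(a1,a2)\<in>I" "cle (a1,a2) (1,p1)" "(a1,a2)\<noteq>(1,p1)" unfolding Lo_def by auto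
    thus False by (auto simp: memI cle_def)
  qed
  have C3: "(1,e)\<notin>R" if e: "e\<le>p1" for e
  proof
    assume eR: "(1,e)\<in>R"
    have "e < p1" using e eR C3a by (cases "e = p1") auto
    moreover have "(1,p1) \<in> ?P" using h by (auto simp: memP)
    moreover have "cle (1,e) (1,p1)" "cle (1,p1) (1,p1+1)" using e by (auto simp: cle_def)
    ultimately have "(1,p1)\<in>R" using RIC eR C2 unfolding interval_closed_def by blast
    thus False using C3a by simp
  qed
  define d where "d = (if p1 = p2 then p2 else p2+1)"
  have C4: "(2,d)\<in>R"
  proof (rule ccontr)
    assume nR: "(2,d)\<notin>R"
    have xP: "(2,d)\<in>?P" using h by (auto simp: memP d_def)
    have xI: "(2,d)\<in>I" using memI h by (auto simp: d_def)
    have "Lo I (2,d)" unfolding Lo_def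
      by (rule bexI[of _ "if p1 = p2 then (1,p1) else (2,p2)"]) (use h in \<open>auto simp: memI cle_def d_def\<close>)
    moreover have "Up R (2,d)" unfolding Up_def by (rule bexI[of _ "(2,q2+1)"]) (use h C1 in \<open>auto simp: cle_def d_def\<close>)
    ultimately show False using ph[OF xP] nR xI unfolding phi_def by auto
  qed
  have dle: "d \<le> p1" using h by (auto simp: d_def)
  have "\<forall>e. (1,e)\<in>R \<longrightarrow> d<e"
  proof (intro allI impI)
    fix e assume "(1,e)\<in>R"
    hence "\<not> e \<le> p1" using C3 by blast
    thus "d < e" using dle by simp
  qed
  thus "B R" unfolding B_def
    by (intro exI[of _ "p1+1"] exI[of _ "q2+1"] exI[of _ d]) (use C1 C2 C4 h in auto)
qed


lemma core2:
  assumes ph: "\<And>x. x\<in>twoByN n \<Longrightarrow> phi (twoByN n) I R x"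
    and IIC: "interval_closed (twoByN n) cle I"
    and R: "R = Sh p1 q1 p2 q2"
    and h: "p1\<le>q1" "p2\<le>q2" "p1\<le>q2" "p2<p1" "q2\<le>q1" "q1\<le>n" "1\<le>p2"
  shows "A I"
proof -
  let ?P = "twoByN n"
  have memR: "\<And>i j. ((i,j)\<in>R) = ((i=1 \<and> p1\<le>j \<and> j\<le>q1) \<or> (i=2 \<and> p2\<le>j \<and> j\<le>q2))"
    by (simp add: R memSh)
  have IP: "I \<subseteq> ?P" using IIC by (simp add: interval_closed_def)
  have D1': "(1,e)\<notin>I" if e: "1\<le>e" "e+1<p1" for e
  proof
    assume eI: "(1,e)\<in>I"
    hence xP: "(1,e)\<in>?P" using IP by auto
    have "(1,e)\<notin>R" using memR e by auto
    hence "\<not> gUp ?P R (1,e)" using ph[OF xP] eI unfolding phi_def by auto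
    moreover have "gUp ?P R (1,e)" unfolding gUp_def
      by (rule bexI[of _ "(1,p1)"], rule bexI[of _ "(1,p1-1)"])
         (use e xP h in \<open>auto simp: cle_def memR memP\<close>)
    ultimately show False by simp
  qed
  have xP1: "(1,p1-1) \<in> ?P" using h by (auto simp: memP)
  have D1: "(1,p1-1)\<in>I"
  proof (rule ccontr)
    assume nI: "(1,p1-1)\<notin>I"
    have nR: "(1,p1-1)\<notin>R" using memR h by auto
    have "gLo ?P I (1,p1-1) \<or> gUp ?P R (1,p1-1)" using ph[OF xP1] nR nI unfolding phi_def by auto
    moreover have "\<not> gUp ?P R (1,p1-1)"
    proof
      assume "gUp ?P R (1,p1-1)"
      then obtain b1 b2 z1 z2 where "(b1,b2)\<in>R" "(z1,z2)\<in>?P" "cle (1,p1-1) (z1,z2)" "cle (z1,z2) (b1,b2)"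
        "(z1,z2)\<notin>R" "(z1,z2)\<noteq>(1,p1-1)" unfolding gUp_def by auto
      thus False using h by (auto simp: memR memP cle_def)
    qed
    moreover have "\<not> gLo ?P I (1,p1-1)"
    proof
      assume "gLo ?P I (1,p1-1)"
      then obtain a1 a2 z1 z2 where a: "(a1,a2)\<in>I" "(z1,z2)\<in>?P" "cle (a1,a2) (z1,z2)" "cle (z1,z2) (1,p1-1)"
        "(z1,z2)\<notin>I" "(z1,z2)\<noteq>(1,p1-1)" unfolding gLo_def by auto
      have "(a1,a2) \<in> ?P" using a IP by auto
      hence "a1 = 1" "1 \<le> a2" "a2+1 < p1 \<or> (a1,a2) = (z1,z2)" using a by (auto simp: memP cle_def)
      thus False using D1'[of a2] a by auto
    qed
    ultimately show False by simp
  qed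
  have D2: "(2,q2-1)\<in>I"
  proof (rule ccontr)
    assume nI: "(2,q2-1)\<notin>I"
    have xP: "(2,q2-1)\<in>?P" using h by (auto simp: memP)
    have xR: "(2,q2-1)\<in>R" using memR h by auto
    have "Lo I (2,q2-1)" unfolding Lo_def by (rule bexI[of _ "(1,p1-1)"]) (use h D1 in \<open>auto simp: cle_def\<close>)
    moreover have "Up R (2,q2-1)" unfolding Up_def by (rule bexI[of _ "(2,q2)"]) (use h in \<open>auto simp: memR cle_def\<close>)
    ultimately show False using ph[OF xP] nI xR unfolding phi_def by auto
  qed
  have D3a: "(2,q2)\<notin>I"
  proof
    assume xI: "(2,q2)\<in>I"
    have xP: "(2,q2)\<in>?P" using xI IP by auto
    have xR: "(2,q2)\<in>R" using memR h by auto
    have "Up R (2,q2)" using ph[OF xP] xR xI unfolding phi_def by auto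
    then obtain b1 b2 where "(b1,b2)\<in>R" "cle (2,q2) (b1,b2)" "(b1,b2)\<noteq>(2,q2)" unfolding Up_def by auto
    thus False by (auto simp: memR cle_def)
  qed
  have D3: "(2,e)\<notin>I" if e: "q2\<le>e" for e
  proof
    assume eI: "(2,e)\<in>I"
    have "q2 < e" using e eI D3a by (cases "e = q2") auto
    moreover have "(2,q2) \<in> ?P" using h by (auto simp: memP)
    moreover have "cle (2,q2-1) (2,q2)" "cle (2,q2) (2,e)" using e by (auto simp: cle_def)
    ultimately have "(2,q2)\<in>I" using IIC eI D2 unfolding interval_closed_def by blast
    thus False using D3a by simp
  qed
  define d where "d = (if q1 = q2 then q1 else q1-1)"
  have D4: "(1,d)\<in>I"
  proof (rule ccontr)
    assume nI: "(1,d)\<notin>I"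
    have xP: "(1,d)\<in>?P" using h by (auto simp: memP d_def)
    have xR: "(1,d)\<in>R" using memR h by (auto simp: d_def)
    have "Lo I (1,d)" unfolding Lo_def
      by (rule bexI[of _ "(1,p1-1)"]) (use h D1 in \<open>auto simp: cle_def d_def\<close>)
    moreover have "Up R (1,d)" unfolding Up_def
      by (rule bexI[of _ "if q1 = q2 then (2,q2) else (1,q1)"]) (use h in \<open>auto simp: memR cle_def d_def\<close>)
    ultimately show False using ph[OF xP] nI xR unfolding phi_def by auto
  qed
  have dle: "q2 \<le> d" using h by (auto simp: d_def)
  have "\<forall>e. (2,e)\<in>I \<longrightarrow> e<d"
  proof (intro allI impI)
    fix e assume "(2,e)\<in>I"
    hence "\<not> q2 \<le> e" using D3 by blast
    thus "e < d" using dle by simp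
  qed
  thus "A I" unfolding A_def
    by (intro exI[of _ "p1-1"] exI[of _ "q2-1"] exI[of _ d]) (use D1 D2 D4 h in auto)
qed




lemma maxel_Sh: "maxel cle (Sh p1 q1 p2 q2) =
  (if p2\<le>q2 then {(2,q2)} else {}) \<union> (if p1\<le>q1 \<and> (q2<p2 \<or> q2<q1) then {(1,q1)} else {})"
proof (rule set_eqI)
  fix x :: "nat\<times>nat"
  obtain i j where x: "x = (i,j)" by fastforce
  show "x \<in> maxel cle (Sh p1 q1 p2 q2) \<longleftrightarrow> x \<in> (if p2\<le>q2 then {(2,q2)} else {}) \<union> (if p1\<le>q1 \<and> (q2<p2 \<or> q2<q1) then {(1,q1)} else {})"
  proof
    assume m: "x \<in> maxel cle (Sh p1 q1 p2 q2)"
    hence xin: "(i,j) \<in> Sh p1 q1 p2 q2" and all: "\<forall>y\<in>Sh p1 q1 p2 q2. cle (i,j) y \<longrightarrow> y = (i,j)"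
      unfolding maxel_def x by auto
    have y1: "(2,q2)\<in>Sh p1 q1 p2 q2 \<longrightarrow> cle (i,j) (2,q2) \<longrightarrow> (2,q2) = (i,j)" using all by blast
    have y2: "(1,q1)\<in>Sh p1 q1 p2 q2 \<longrightarrow> cle (i,j) (1,q1) \<longrightarrow> (1,q1) = (i,j)" using all by blast
    show "x \<in> (if p2\<le>q2 then {(2,q2)} else {}) \<union> (if p1\<le>q1 \<and> (q2<p2 \<or> q2<q1) then {(1,q1)} else {})"
      using xin y1 y2 unfolding x by (auto simp: memSh cle_def)
  next
    assume "x \<in> (if p2\<le>q2 then {(2,q2)} else {}) \<union> (if p1\<le>q1 \<and> (q2<p2 \<or> q2<q1) then {(1,q1)} else {})"
    thus "x \<in> maxel cle (Sh p1 q1 p2 q2)" unfolding maxel_def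
      by (auto split: if_splits simp: memSh cle_def Sh_def)
  qed
qed

lemma minel_Sh: "minel cle (Sh p1 q1 p2 q2) =
  (if p1\<le>q1 then {(1,p1)} else {}) \<union> (if p2\<le>q2 \<and> (q1<p1 \<or> p2<p1) then {(2,p2)} else {})"
proof (rule set_eqI)
  fix x :: "nat\<times>nat"
  obtain i j where x: "x = (i,j)" by fastforce
  show "x \<in> minel cle (Sh p1 q1 p2 q2) \<longleftrightarrow> x \<in> (if p1\<le>q1 then {(1,p1)} else {}) \<union> (if p2\<le>q2 \<and> (q1<p1 \<or> p2<p1) then {(2,p2)} else {})"
  proof
    assume m: "x \<in> minel cle (Sh p1 q1 p2 q2)"
    hence xin: "(i,j) \<in> Sh p1 q1 p2 q2" and all: "\<forall>y\<in>Sh p1 q1 p2 q2. cle y (i,j) \<longrightarrow> y = (i,j)"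
      unfolding minel_def x by auto
    have y1: "(1,p1)\<in>Sh p1 q1 p2 q2 \<longrightarrow> cle (1,p1) (i,j) \<longrightarrow> (1,p1) = (i,j)" using all by blast
    have y2: "(2,p2)\<in>Sh p1 q1 p2 q2 \<longrightarrow> cle (2,p2) (i,j) \<longrightarrow> (2,p2) = (i,j)" using all by blast
    show "x \<in> (if p1\<le>q1 then {(1,p1)} else {}) \<union> (if p2\<le>q2 \<and> (q1<p1 \<or> p2<p1) then {(2,p2)} else {})"
      using xin y1 y2 unfolding x by (auto simp: memSh cle_def)
  next
    assume "x \<in> (if p1\<le>q1 then {(1,p1)} else {}) \<union> (if p2\<le>q2 \<and> (q1<p1 \<or> p2<p1) then {(2,p2)} else {})"
    thus "x \<in> minel cle (Sh p1 q1 p2 q2)" unfolding minel_def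
      by (auto split: if_splits simp: memSh cle_def Sh_def)
  qed
qed

lemma card_two: "card ((if P then {(2::nat,a::nat)} else {}) \<union> (if Q then {(1,b)} else {})) =
   (if P then 1 else 0) + (if Q then 1 else 0)"
  by (cases P; cases Q) auto

lemma card_two': "card ((if P then {(1::nat,a::nat)} else {}) \<union> (if Q then {(2,b)} else {})) =
   (if P then 1 else 0) + (if Q then 1 else 0)"
  by (cases P; cases Q) auto

lemma stat_Sh:
  assumes con: "p1\<le>q1 \<and> p2\<le>q2 \<longrightarrow> q2<p1 \<or> (p2\<le>p1 \<and> p1\<le>q2 \<and> q2\<le>q1)"
  shows "real (card (maxel cle (Sh p1 q1 p2 q2))) - real (card (minel cle (Sh p1 q1 p2 q2)))
    = (if A (Sh p1 q1 p2 q2) then 1 else 0) - (if B (Sh p1 q1 p2 q2) then 1 else 0)"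
  unfolding maxel_Sh minel_Sh card_two card_two' A_Sh B_Sh using con by auto




lemma A_imp_B:
  assumes le: "linear_extension (twoByN n) cle xs" and IC: "interval_closed (twoByN n) cle I"
  shows "A I = B (rowmotion (twoByN n) cle xs I)"
proof
  let ?R = "rowmotion (twoByN n) cle xs I"
  have ph: "\<And>x. x\<in>twoByN n \<Longrightarrow> phi (twoByN n) I ?R x" using row_phi[OF le IC] .
  have RIC: "interval_closed (twoByN n) cle ?R" using row_IC[OF IC] .
  {
    assume a: "A I"
    obtain p1 q1 p2 q2 where s: "I = Sh p1 q1 p2 q2" "1\<le>p1" "q1\<le>n" "1\<le>p2" "q2\<le>n"
      "p1\<le>q1 \<and> p2\<le>q2 \<longrightarrow> q2<p1 \<or> (p2\<le>p1 \<and> p1\<le>q2 \<and> q2\<le>q1)"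
      using shape[OF IC] by blast
    have c: "p1\<le>q1" "p2\<le>q2" "p1\<le>q2" "q2<q1" using a s(1) A_Sh by auto
    hence "p2 \<le> p1" using s(6) by auto
    thus "B ?R" using core1[OF ph RIC s(1)] c s by auto
  }
  {
    assume b: "B ?R"
    obtain p1 q1 p2 q2 where s: "?R = Sh p1 q1 p2 q2" "1\<le>p1" "q1\<le>n" "1\<le>p2" "q2\<le>n"
      "p1\<le>q1 \<and> p2\<le>q2 \<longrightarrow> q2<p1 \<or> (p2\<le>p1 \<and> p1\<le>q2 \<and> q2\<le>q1)"
      using shape[OF RIC] by blast
    have c: "p1\<le>q1" "p2\<le>q2" "p1\<le>q2" "p2<p1" using b s(1) B_Sh by auto
    hence "q2 \<le> q1" using s(6) by auto
    thus "A I" using core2[OF ph IC s(1)] c s by auto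
  }
qed

lemma stat_IC:
  assumes IC: "interval_closed (twoByN n) cle I"
  shows "real (card (maxel cle I)) - real (card (minel cle I)) = (if A I then 1 else 0) - (if B I then 1 else 0)"
proof -
  obtain p1 q1 p2 q2 where s: "I = Sh p1 q1 p2 q2"
      "p1\<le>q1 \<and> p2\<le>q2 \<longrightarrow> q2<p1 \<or> (p2\<le>p1 \<and> p1\<le>q2 \<and> q2\<le>q1)"
      using shape[OF IC] by blast
  show ?thesis unfolding s(1) using stat_Sh[OF s(2)] .
qed

theorem theorem4p7:
  fixes n :: nat and xs :: "(nat \<times> nat) list"
  assumes "n \<ge> 1"
    and "linear_extension (twoByN n) cle xs"
  shows "mesic (IC (twoByN n) cle) (rowmotion (twoByN n) cle xs)
           (\<lambda>I. real (card (maxel cle I)) - real (card (minel cle I))) 0"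
  unfolding mesic_def
proof
  fix I0 assume I0: "I0 \<in> IC (twoByN n) cle"
  let ?f = "rowmotion (twoByN n) cle xs"
  let ?O = "orbit ?f I0"
  have it: "interval_closed (twoByN n) cle ((?f ^^ k) I0)" for k
    by (induction k) (use I0 in \<open>auto simp: IC_def row_IC\<close>)
  have OIC: "\<And>y. y \<in> ?O \<Longrightarrow> interval_closed (twoByN n) cle y"
    unfolding orbit_def using it by auto
  have finP: "finite (twoByN n)" by (simp add: twoByN_def)
  have "?O \<subseteq> Pow (twoByN n)" using OIC by (auto simp: interval_closed_def)
  hence fin: "finite ?O" using finP finite_subset by blast
  have img: "?f ` ?O \<subseteq> ?O"
  proof
    fix y assume "y \<in> ?f ` ?O"
    then obtain k where "y = ?f ((?f ^^ k) I0)" unfolding orbit_def by auto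
    hence "y = (?f ^^ Suc k) I0" by simp
    thus "y \<in> ?O" unfolding orbit_def by blast
  qed
  have inj: "inj_on ?f ?O" using OIC row_inj unfolding inj_on_def by blast
  have eqO: "?f ` ?O = ?O" using endo_inj_surj[OF fin img inj] .
  let ?b = "\<lambda>y. (if B y then 1 else 0) :: real"
  have "(\<Sum>y\<in>?O. real (card (maxel cle y)) - real (card (minel cle y)))
      = (\<Sum>y\<in>?O. ?b (?f y) - ?b y)"
  proof (rule sum.cong)
    fix y assume "y \<in> ?O"
    hence yIC: "interval_closed (twoByN n) cle y" using OIC by blast
    show "real (card (maxel cle y)) - real (card (minel cle y)) = ?b (?f y) - ?b y"
      using stat_IC[OF yIC] A_imp_B[OF assms(2) yIC] by simp
  qed simp
  also have "\<dots> = (\<Sum>y\<in>?O. ?b (?f y)) - (\<Sum>y\<in>?O. ?b y)" by (simp add: sum_subtractf)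
  also have "(\<Sum>y\<in>?O. ?b (?f y)) = (\<Sum>y\<in>?f ` ?O. ?b y)"
    using sum.reindex[OF inj, of ?b] by simp
  also have "\<dots> = (\<Sum>y\<in>?O. ?b y)" using eqO by simp
  finally have "(\<Sum>y\<in>?O. real (card (maxel cle y)) - real (card (minel cle y))) = 0" by simp
  thus "(\<Sum>y\<in>?O. real (card (maxel cle y)) - real (card (minel cle y))) / real (card ?O) = 0" by simp
qed



end
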